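(* Let $\Gamma$ be a countable group and $M=L(\Gamma)$ with canonical unitaries $\{u_\gamma\}_{\gamma\in\Gamma}$ and trace $\tau$. Let $\Sigma\subseteq\Gamma$ be a subset and $\mathcal S\subseteq (M)_1$ a subset of the unit ball of $M$. If there exist $x,y\in M$ such that $h_\Sigma(x\mathcal S y)>0$, then there is a finite subset $F\subset\Gamma$ such that $h_{F\Sigma F}(\mathcal S)>0$. In particular, for every unitary $u\in\mathcal U(M)$ we have $h_\Gamma(\mathcal S)>0$ if and only if $h_\Gamma(u\mathcal S u^* )>0$.
   Context: For a subset $\Omega\subseteq\Gamma$ and $z\in L(\Gamma)$, the height of $z$ along $\Omega$ is $h_\Omega(z)=\sup_{\gamma\in\Omega}|\tau(zu_\gamma)|$, and for a subset $\mathcal T\subseteq L(\Gamma)$, $h_\Omega(\mathcal T)=\inf_{z\in\mathcal T}h_\Omega(z)$. Here $x\mathcal S y=\{xsy: s\in\mathcal S\}$, $F\Sigma F=\{f\sigma f': f,f'\in F,\sigma\in\Sigma\}$, and $u\mathcal S u^*=\{usu^*:s\in\mathcal S\}$. *)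

theory Defs
  imports "HOL-Analysis.Analysis" "HOL-Library.Countable"
begin

text \<open>The group von Neumann algebra L(Gamma) of a countable (not necessarily abelian)
group, written additively via the type class group_add.  An element x of L(Gamma) is
identified with its Fourier coefficient function x = x delta_e in l2(Gamma); x acts on
l2(Gamma) by left convolution, and L(Gamma) consists exactly of those l2 functions whose
left convolution operator is bounded on l2(Gamma).\<close>

definition l2 :: "('g \<Rightarrow> complex) \<Rightarrow> bool" where
  "l2 f \<longleftrightarrow> (\<lambda>g. (norm (f g))\<^sup>2) summable_on UNIV"

definition l2norm :: "('g \<Rightarrow> complex) \<Rightarrow> real" where
  "l2norm f = sqrt (\<Sum>\<^sub>\<infinity>g. (norm (f g))\<^sup>2)"

definition conv :: "('g::group_add \<Rightarrow> complex) \<Rightarrow> ('g \<Rightarrow> complex) \<Rightarrow> 'g \<Rightarrow> complex" where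
  "conv f h = (\<lambda>g. \<Sum>\<^sub>\<infinity>k. f k * h (- k + g))"

definition LG :: "('g::group_add \<Rightarrow> complex) set" where
  "LG = {x. l2 x \<and> (\<exists>C. \<forall>\<xi>. l2 \<xi> \<longrightarrow> l2 (conv x \<xi>) \<and> l2norm (conv x \<xi>) \<le> C * l2norm \<xi>)}"

definition LG_ball :: "('g::group_add \<Rightarrow> complex) set" where
  "LG_ball = {x \<in> LG. \<forall>\<xi>. l2 \<xi> \<longrightarrow> l2norm (conv x \<xi>) \<le> l2norm \<xi>}"

definition cu :: "'g::group_add \<Rightarrow> 'g \<Rightarrow> complex" where
  "cu \<gamma> = (\<lambda>g. if g = \<gamma> then 1 else 0)"

definition adj :: "('g::group_add \<Rightarrow> complex) \<Rightarrow> 'g \<Rightarrow> complex" where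
  "adj x = (\<lambda>g. cnj (x (- g)))"

definition tau :: "('g::group_add \<Rightarrow> complex) \<Rightarrow> complex" where
  "tau x = x 0"

definition unitary_LG :: "('g::group_add \<Rightarrow> complex) \<Rightarrow> bool" where
  "unitary_LG u \<longleftrightarrow> u \<in> LG \<and> conv (adj u) u = cu 0 \<and> conv u (adj u) = cu 0"

text \<open>Heights (valued in [0,\<infinity>], so that sup over the empty set is 0 and inf over
the empty set is \<infinity>).\<close>
definition height :: "'g::group_add set \<Rightarrow> ('g \<Rightarrow> complex) \<Rightarrow> ennreal" where
  "height \<Omega> z = (SUP \<gamma>\<in>\<Omega>. ennreal (cmod (tau (conv z (cu \<gamma>)))))"

definition height_set :: "'g::group_add set \<Rightarrow> ('g \<Rightarrow> complex) set \<Rightarrow> ennreal" where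
  "height_set \<Omega> T = (INF z\<in>T. height \<Omega> z)"

definition sandwich :: "('g::group_add \<Rightarrow> complex) \<Rightarrow> ('g \<Rightarrow> complex) set \<Rightarrow> ('g \<Rightarrow> complex) \<Rightarrow> ('g \<Rightarrow> complex) set" where
  "sandwich x S y = (\<lambda>s. conv (conv x s) y) ` S"

definition FSF :: "'g::group_add set \<Rightarrow> 'g set \<Rightarrow> 'g set" where
  "FSF F \<Sigma> = {f + \<sigma> + f' | f \<sigma> f'. f \<in> F \<and> \<sigma> \<in> \<Sigma> \<and> f' \<in> F}"

end

theory Submission
  imports Defs
begin

definition nn :: "('g \<Rightarrow> complex) \<Rightarrow> real" where
  "nn f = (\<Sum>\<^sub>\<infinity>g. (norm (f g))\<^sup>2)"

lemma l2norm_nn: "l2norm f = sqrt (nn f)"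
  by (simp add: l2norm_def nn_def)

lemma nn_nonneg: "nn f \<ge> 0"
  unfolding nn_def by (rule infsum_nonneg) auto

lemma l2norm_nonneg: "l2norm f \<ge> 0"
  by (simp add: l2norm_nn nn_nonneg)

lemma finite_cs:
  fixes f h :: "'a \<Rightarrow> complex"
  shows "(\<Sum>k\<in>G. norm (f k * h k)) \<le> sqrt (\<Sum>k\<in>G. (norm (f k))\<^sup>2) * sqrt (\<Sum>k\<in>G. (norm (h k))\<^sup>2)"
proof -
  have "(\<Sum>k\<in>G. norm (f k) * norm (h k))\<^sup>2 \<le> (\<Sum>k\<in>G. (norm (f k))\<^sup>2) * (\<Sum>k\<in>G. (norm (h k))\<^sup>2)"
    by (rule Cauchy_Schwarz_ineq_sum)
  hence "sqrt ((\<Sum>k\<in>G. norm (f k) * norm (h k))\<^sup>2) \<le> sqrt ((\<Sum>k\<in>G. (norm (f k))\<^sup>2) * (\<Sum>k\<in>G. (norm (h k))\<^sup>2))"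
    using real_sqrt_le_mono by blast
  moreover have "(\<Sum>k\<in>G. norm (f k) * norm (h k)) \<ge> 0" by (simp add: sum_nonneg)
  ultimately show ?thesis by (simp add: norm_mult real_sqrt_mult)
qed

lemma l2_partial_le:
  assumes "l2 f" "finite G"
  shows "(\<Sum>k\<in>G. (norm (f k))\<^sup>2) \<le> nn f"
  unfolding nn_def using assms unfolding l2_def
  by (intro finite_sum_le_infsum) auto

lemma cs:
  assumes "l2 f" "l2 h"
  shows "(\<lambda>k. norm (f k * h k)) summable_on UNIV"
    and "(\<Sum>\<^sub>\<infinity>k. norm (f k * h k)) \<le> l2norm f * l2norm h"
proof -
  have B: "(\<Sum>k\<in>G. norm (f k * h k)) \<le> l2norm f * l2norm h" if "finite G" for G
  proof -
    have "(\<Sum>k\<in>G. norm (f k * h k)) \<le> sqrt (\<Sum>k\<in>G. (norm (f k))\<^sup>2) * sqrt (\<Sum>k\<in>G. (norm (h k))\<^sup>2)"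
      by (rule finite_cs)
    also have "\<dots> \<le> l2norm f * l2norm h" unfolding l2norm_nn
      using l2_partial_le[OF assms(1) that] l2_partial_le[OF assms(2) that]
      by (intro mult_mono real_sqrt_le_mono) (auto simp: nn_nonneg sum_nonneg)
    finally show ?thesis .
  qed
  show S: "(\<lambda>k. norm (f k * h k)) summable_on UNIV"
    by (rule nonneg_bdd_above_summable_on) (use B in \<open>auto intro!: bdd_aboveI2\<close>)
  show "(\<Sum>\<^sub>\<infinity>k. norm (f k * h k)) \<le> l2norm f * l2norm h"
    by (rule infsum_le_finite_sums[OF S]) (use B in auto)
qed

lemma cs_bound:
  assumes "l2 f" "l2 h"
  shows "(\<lambda>k. f k * h k) summable_on UNIV"
    and "norm (\<Sum>\<^sub>\<infinity>k. f k * h k) \<le> l2norm f * l2norm h"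
proof -
  show "(\<lambda>k. f k * h k) summable_on UNIV"
    using cs(1)[OF assms] by (rule abs_summable_summable)
  show "norm (\<Sum>\<^sub>\<infinity>k. f k * h k) \<le> l2norm f * l2norm h"
    using norm_infsum_bound[OF cs(1)[OF assms]] cs(2)[OF assms] by linarith
qed

lemma l2_bij:
  assumes "bij p"
  shows "l2 (\<lambda>k. f (p k)) \<longleftrightarrow> l2 f" and "nn (\<lambda>k. f (p k)) = nn f"
  unfolding l2_def nn_def
  using summable_on_reindex_bij_betw[OF assms[unfolded bij_betw_def[symmetric]], of "\<lambda>k. (norm (f k))\<^sup>2"]
    infsum_reindex_bij_betw[OF assms[unfolded bij_betw_def[symmetric]], of "\<lambda>k. (norm (f k))\<^sup>2"]
  by auto

lemma bij_shift1: "bij (\<lambda>k::'g::group_add. -k + g)"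
  by (rule bij_betw_byWitness[where f'="\<lambda>m. g - m"]) (auto simp: algebra_simps minus_add)

lemma bij_shift2: "bij (\<lambda>k::'g::group_add. k + g)"
  by (rule bij_betw_byWitness[where f'="\<lambda>m. m - g"]) (auto simp: algebra_simps)

lemma bij_shift3: "bij (\<lambda>k::'g::group_add. g + k)"
  by (rule bij_betw_byWitness[where f'="\<lambda>m. -g + m"]) (auto simp: add.assoc[symmetric])

lemma bij_neg: "bij (\<lambda>k::'g::group_add. -k)"
  by (rule bij_betw_byWitness[where f'="\<lambda>m. - m"]) auto

lemma l2_cnj: "l2 (\<lambda>k. cnj (f k)) \<longleftrightarrow> l2 f" and nn_cnj: "nn (\<lambda>k. cnj (f k)) = nn f"
  by (simp_all add: l2_def nn_def)

lemma l2_fin: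
  assumes "finite F" "\<And>k. k \<notin> F \<Longrightarrow> f k = 0"
  shows "l2 f"
  unfolding l2_def
  using summable_on_cong_neutral[of F UNIV "\<lambda>k. (norm (f k))\<^sup>2" "\<lambda>k. (norm (f k))\<^sup>2"] assms
  by auto

lemma l2_dom:
  assumes "l2 f" "\<And>k. norm (h k) \<le> norm (f k)"
  shows "l2 h"
  unfolding l2_def
  by (rule summable_on_comparison_test[OF assms(1)[unfolded l2_def]])
     (auto intro: power_mono assms(2))

lemma l2_add:
  assumes "l2 f" "l2 h"
  shows "l2 (\<lambda>k. f k + h k)"
proof -
  have s: "(\<lambda>k. 2 * (norm (f k))\<^sup>2 + 2 * (norm (h k))\<^sup>2) summable_on UNIV"
    using assms unfolding l2_def
    by (intro summable_on_add summable_on_cmult_right) auto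
  have "(norm (f k + h k))\<^sup>2 \<le> 2 * (norm (f k))\<^sup>2 + 2 * (norm (h k))\<^sup>2" for k
  proof -
    have "(norm (f k + h k))\<^sup>2 \<le> (norm (f k) + norm (h k))\<^sup>2"
      by (intro power_mono norm_triangle_ineq) auto
    also have "\<dots> \<le> 2 * (norm (f k))\<^sup>2 + 2 * (norm (h k))\<^sup>2"
      using zero_le_power2[of "norm (f k) - norm (h k)"]
      by (simp add: power2_eq_square algebra_simps)
    finally show ?thesis .
  qed
  then show ?thesis unfolding l2_def
    by (intro summable_on_comparison_test[OF s]) auto
qed

lemma l2_neg: "l2 (\<lambda>k. - f k) \<longleftrightarrow> l2 f"
  by (simp add: l2_def)

lemma l2_diff:
  assumes "l2 f" "l2 h"
  shows "l2 (\<lambda>k. f k - h k)"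
  using l2_add[OF assms(1) l2_neg[THEN iffD2, OF assms(2)]] by simp

lemma l2_restr:
  assumes "l2 f"
  shows "l2 (\<lambda>k. if k \<in> F then f k else 0)" and "l2 (\<lambda>k. if k \<in> F then 0 else f k)"
  by (rule l2_dom[OF assms]; simp)+

lemma nn_split:
  assumes "l2 f" "finite F"
  shows "nn (\<lambda>k. if k \<in> F then 0 else f k) = nn f - (\<Sum>k\<in>F. (norm (f k))\<^sup>2)"
proof -
  have "nn f = (\<Sum>\<^sub>\<infinity>k. (norm (if k \<in> F then f k else 0))\<^sup>2 + (norm (if k \<in> F then 0 else f k))\<^sup>2)"
    unfolding nn_def by (rule infsum_cong) auto
  also have "\<dots> = (\<Sum>\<^sub>\<infinity>k. (norm (if k \<in> F then f k else 0))\<^sup>2) + nn (\<lambda>k. if k \<in> F then 0 else f k)"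
    unfolding nn_def using l2_restr[OF assms(1), of F] unfolding l2_def
    by (intro infsum_add) auto
  also have "(\<Sum>\<^sub>\<infinity>k. (norm (if k \<in> F then f k else 0))\<^sup>2) = (\<Sum>k\<in>F. (norm (f k))\<^sup>2)"
    using infsum_cong_neutral[of F UNIV "\<lambda>k. (norm (f k))\<^sup>2" "\<lambda>k. (norm (if k \<in> F then f k else 0))\<^sup>2"]
      assms(2) by auto
  finally show ?thesis by simp
qed

lemma l2_tail:
  assumes "l2 f" "\<epsilon> > 0"
  shows "\<exists>F. finite F \<and> l2norm (\<lambda>k. if k \<in> F then 0 else f k) < \<epsilon>"
proof -
  have "((\<lambda>F. \<Sum>k\<in>F. (norm (f k))\<^sup>2) \<longlongrightarrow> nn f) (finite_subsets_at_top UNIV)"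
    unfolding nn_def using assms(1) unfolding l2_def by (rule infsum_tendsto)
  hence "\<forall>\<^sub>F F in finite_subsets_at_top UNIV. dist (\<Sum>k\<in>F. (norm (f k))\<^sup>2) (nn f) < \<epsilon>\<^sup>2"
    using assms(2) tendstoD by fastforce
  then obtain F where F: "finite F" "dist (\<Sum>k\<in>F. (norm (f k))\<^sup>2) (nn f) < \<epsilon>\<^sup>2"
    unfolding eventually_finite_subsets_at_top by blast
  have "nn (\<lambda>k. if k \<in> F then 0 else f k) < \<epsilon>\<^sup>2"
    using F nn_split[OF assms(1) F(1)] by (simp add: dist_real_def)
  hence "l2norm (\<lambda>k. if k \<in> F then 0 else f k) < sqrt (\<epsilon>\<^sup>2)"
    unfolding l2norm_nn by (rule real_sqrt_less_mono)
  thus ?thesis using F(1) assms(2) by auto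
qed

lemma infsum_single:
  assumes "\<And>k. k \<noteq> kk \<Longrightarrow> F k = (0::'b::{comm_monoid_add,t2_space})"
  shows "(\<Sum>\<^sub>\<infinity>k. F k) = F kk"
proof -
  have "infsum F UNIV = infsum F {kk}" by (rule infsum_cong_neutral) (use assms in auto)
  thus ?thesis by simp
qed

lemma neg_add_0: "(-k + g = (0::'g::group_add)) = (k = g)"
  by (metis add_minus_cancel add_0_right)

lemma l2_shift: fixes h :: "'g::group_add \<Rightarrow> complex" shows "l2 (\<lambda>k. h (-k + g)) \<longleftrightarrow> l2 h" and l2norm_shift: "l2norm (\<lambda>k. h (-k + g)) = l2norm h"
proof -
  show "l2 (\<lambda>k. h (-k + g)) \<longleftrightarrow> l2 h" by (rule l2_bij(1)[OF bij_shift1[of g]])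
  show "l2norm (\<lambda>k. h (-k + g)) = l2norm h" unfolding l2norm_nn
    by (subst l2_bij(2)[OF bij_shift1[of g]]) (rule refl)
qed

lemma conv_summable:
  fixes f h :: "'g::group_add \<Rightarrow> complex"
  assumes "l2 f" "l2 h"
  shows "(\<lambda>k. f k * h (-k + g)) summable_on UNIV"
  using cs_bound(1)[OF assms(1), of "\<lambda>k. h (-k + g)"] assms(2) l2_shift(1)[of h g] by simp

lemma conv_bound:
  assumes "l2 f" "l2 h"
  shows "norm (conv f h g) \<le> l2norm f * l2norm h"
  using cs_bound(2)[OF assms(1), of "\<lambda>k. h (-k + g)"] assms(2) l2_shift(1)[of h g] l2norm_shift[of h g]
  unfolding conv_def by simp


lemma conv_add2:
  assumes "l2 f" "l2 h1" "l2 h2"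
  shows "conv f (\<lambda>k. h1 k + h2 k) g = conv f h1 g + conv f h2 g"
  unfolding conv_def
  using infsum_add[OF conv_summable[OF assms(1,2)] conv_summable[OF assms(1,3)]]
  by (simp add: distrib_left)

lemma conv_diff2:
  assumes "l2 f" "l2 h1" "l2 h2"
  shows "conv f (\<lambda>k. h1 k - h2 k) g = conv f h1 g - conv f h2 g"
proof -
  have "conv f h1 g = conv f (\<lambda>k. (h1 k - h2 k) + h2 k) g" by simp
  also have "\<dots> = conv f (\<lambda>k. h1 k - h2 k) g + conv f h2 g"
    by (rule conv_add2) (use assms l2_diff in auto)
  finally show ?thesis by simp
qed

lemma conv_add1:
  assumes "l2 f1" "l2 f2" "l2 h"
  shows "conv (\<lambda>k. f1 k + f2 k) h g = conv f1 h g + conv f2 h g"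
  unfolding conv_def
  using infsum_add[OF conv_summable[OF assms(1,3)] conv_summable[OF assms(2,3)]]
  by (simp add: distrib_right)

lemma conv_diff1:
  assumes "l2 f1" "l2 f2" "l2 h"
  shows "conv (\<lambda>k. f1 k - f2 k) h g = conv f1 h g - conv f2 h g"
proof -
  have "conv f1 h g = conv (\<lambda>k. (f1 k - f2 k) + f2 k) h g" by simp
  also have "\<dots> = conv (\<lambda>k. f1 k - f2 k) h g + conv f2 h g"
    by (rule conv_add1) (use assms l2_diff in auto)
  finally show ?thesis by simp
qed

lemma conv_fin1:
  assumes "finite F" "\<And>k. k \<notin> F \<Longrightarrow> f k = 0"
  shows "conv f w g = (\<Sum>a\<in>F. f a * w (-a + g))"
  unfolding conv_def
  using infsum_cong_neutral[of F UNIV "\<lambda>a. f a * w (-a + g)" "\<lambda>a. f a * w (-a + g)"] assms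
  by auto

lemma conv_fin2:
  fixes f w :: "'g::group_add \<Rightarrow> complex"
  assumes "finite F" "\<And>k. k \<notin> F \<Longrightarrow> w k = 0"
  shows "conv f w g = (\<Sum>b\<in>F. f (g + -b) * w b)"
proof -
  have "conv f w g = (\<Sum>\<^sub>\<infinity>b. f (g + -b) * w b)"
    unfolding conv_def
    by (rule infsum_reindex_bij_witness[where j="\<lambda>k. -k + g" and i="\<lambda>b. g + -b"])
       (simp_all add: add.assoc minus_add)
  also have "\<dots> = (\<Sum>b\<in>F. f (g + -b) * w b)"
    using infsum_cong_neutral[of F UNIV "\<lambda>b. f (g + -b) * w b" "\<lambda>b. f (g + -b) * w b"] assms
    by auto
  finally show ?thesis .
qed

lemma tau_conv_cu: "tau (conv z (cu \<gamma>)) = z (-\<gamma>)"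
proof -
  have "tau (conv z (cu \<gamma>)) = (\<Sum>\<^sub>\<infinity>k. z k * cu \<gamma> (-k))"
    unfolding tau_def conv_def by simp
  also have "\<dots> = z (-\<gamma>) * cu \<gamma> (- (-\<gamma>))"
    by (rule infsum_single) (auto simp: cu_def)
  finally show ?thesis by (simp add: cu_def)
qed

lemma conv_cu0_right: "conv s (cu 0) = s"
proof
  fix g
  have "conv s (cu 0) g = s g * cu 0 (-g + g)"
    unfolding conv_def by (rule infsum_single[where kk=g]) (auto simp: cu_def neg_add_0)
  thus "conv s (cu 0) g = s g" by (simp add: cu_def)
qed

lemma conv_cu0_left: "conv (cu 0) s = s"
proof
  fix g
  have "conv (cu 0) s g = cu 0 0 * s (-0 + g)"
    unfolding conv_def using infsum_single[where F="\<lambda>k. cu 0 k * s (-k+g)" and kk=0]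
    by (auto simp: cu_def)
  thus "conv (cu 0) s g = s g" by (simp add: cu_def)
qed

lemma l2_cu: "l2 (cu \<gamma>)"
  by (rule l2_fin[of "{\<gamma>}"]) (auto simp: cu_def)

lemma l2norm_cu0: "l2norm (cu 0 :: 'g::group_add \<Rightarrow> complex) = 1"
proof -
  have "nn (cu 0 :: 'g \<Rightarrow> complex) = (\<Sum>\<^sub>\<infinity>k\<in>{0::'g}. (norm (cu 0 k))\<^sup>2)"
    unfolding nn_def by (rule infsum_cong_neutral) (auto simp: cu_def)
  thus ?thesis by (simp add: l2norm_nn cu_def)
qed

definition lb :: "('g::group_add \<Rightarrow> complex) \<Rightarrow> real \<Rightarrow> bool" where
  "lb a C \<longleftrightarrow> (\<forall>\<xi>. l2 \<xi> \<longrightarrow> l2 (conv a \<xi>) \<and> l2norm (conv a \<xi>) \<le> C * l2norm \<xi>)"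

definition rb :: "('g::group_add \<Rightarrow> complex) \<Rightarrow> real \<Rightarrow> bool" where
  "rb c C \<longleftrightarrow> (\<forall>\<xi>. l2 \<xi> \<longrightarrow> l2 (conv \<xi> c) \<and> l2norm (conv \<xi> c) \<le> C * l2norm \<xi>)"

lemma LG_lb: "x \<in> LG \<longleftrightarrow> l2 x \<and> (\<exists>C. lb x C)"
  by (simp add: LG_def lb_def)

lemma infsum_sum_swap:
  assumes "finite G" "\<And>g. g \<in> G \<Longrightarrow> (\<lambda>m. f g m) summable_on UNIV"
  shows "(\<lambda>m. \<Sum>g\<in>G. f g m) summable_on UNIV \<and> (\<Sum>\<^sub>\<infinity>m. \<Sum>g\<in>G. f g m) = (\<Sum>g\<in>G. \<Sum>\<^sub>\<infinity>m. (f g m :: complex))"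
  using assms
proof (induction G rule: finite_induct)
  case empty
  then show ?case by simp
next
  case (insert x G)
  have s: "(\<lambda>m. \<Sum>g\<in>G. f g m) summable_on UNIV" and e: "(\<Sum>\<^sub>\<infinity>m. \<Sum>g\<in>G. f g m) = (\<Sum>g\<in>G. \<Sum>\<^sub>\<infinity>m. (f g m :: complex))"
    using insert by auto
  have sx: "(\<lambda>m. f x m) summable_on UNIV" using insert.prems by auto
  have "(\<Sum>\<^sub>\<infinity>m. \<Sum>g\<in>insert x G. f g m) = (\<Sum>\<^sub>\<infinity>m. f x m + (\<Sum>g\<in>G. f g m))"
    using insert.hyps by simp
  also have "\<dots> = (\<Sum>\<^sub>\<infinity>m. f x m) + (\<Sum>\<^sub>\<infinity>m. \<Sum>g\<in>G. f g m)"
    by (rule infsum_add[OF sx s])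
  finally have "(\<Sum>\<^sub>\<infinity>m. \<Sum>g\<in>insert x G. f g m) = (\<Sum>g\<in>insert x G. \<Sum>\<^sub>\<infinity>m. (f g m :: complex))"
    using insert.hyps e by simp
  moreover have "(\<lambda>m. \<Sum>g\<in>insert x G. f g m) summable_on UNIV"
    using summable_on_add[OF sx s] insert.hyps by simp
  ultimately show ?case by blast
qed

lemma nn_fin:
  assumes "finite G" "\<And>k. k \<notin> G \<Longrightarrow> \<eta> k = 0"
  shows "nn \<eta> = (\<Sum>k\<in>G. (norm (\<eta> k))\<^sup>2)"
proof -
  have "nn \<eta> = (\<Sum>\<^sub>\<infinity>k\<in>G. (norm (\<eta> k))\<^sup>2)"
    unfolding nn_def by (rule infsum_cong_neutral) (use assms in auto)
  thus ?thesis using assms by simp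
qed

lemma dual_bound:
  fixes v :: "'a \<Rightarrow> complex"
  assumes K: "K \<ge> 0"
    and H: "\<And>G. finite G \<Longrightarrow> (\<Sum>g\<in>G. (norm (v g))\<^sup>2) \<le> K * sqrt (\<Sum>g\<in>G. (norm (v g))\<^sup>2)"
  shows "l2 v \<and> l2norm v \<le> K"
proof -
  have Q: "(\<Sum>g\<in>G. (norm (v g))\<^sup>2) \<le> K\<^sup>2" if "finite G" for G
  proof -
    define Q where "Q = (\<Sum>g\<in>G. (norm (v g))\<^sup>2)"
    have Q0: "Q \<ge> 0" unfolding Q_def by (simp add: sum_nonneg)
    have HQ: "Q \<le> K * sqrt Q" using H[OF that] unfolding Q_def .
    show ?thesis
    proof (cases "Q = 0")
      case True thus ?thesis unfolding Q_def[symmetric] by simp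
    next
      case False
      hence sq: "sqrt Q > 0" using Q0 by simp
      have "sqrt Q * sqrt Q = Q" using Q0 by simp
      hence "sqrt Q * sqrt Q \<le> K * sqrt Q" using HQ by linarith
      hence "sqrt Q \<le> K" using sq mult_right_le_imp_le by blast
      hence "(sqrt Q)\<^sup>2 \<le> K\<^sup>2" using sq by (intro power_mono) auto
      thus ?thesis using Q0 unfolding Q_def[symmetric] by simp
    qed
  qed
  have S: "(\<lambda>g. (norm (v g))\<^sup>2) summable_on UNIV"
    by (rule nonneg_bdd_above_summable_on) (use Q in \<open>auto intro!: bdd_aboveI2\<close>)
  have "nn v \<le> K\<^sup>2" unfolding nn_def
    by (rule infsum_le_finite_sums[OF S]) (use Q in auto)
  hence "l2norm v \<le> sqrt (K\<^sup>2)" unfolding l2norm_nn by (rule real_sqrt_le_mono)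
  thus ?thesis using S K unfolding l2_def by simp
qed

lemma l2_rshift: fixes h :: "'g::group_add \<Rightarrow> complex"
  shows "l2 (\<lambda>k. h (k + g)) \<longleftrightarrow> l2 h"
  by (rule l2_bij(1)[OF bij_shift2[of g]])

lemma adj_lb:
  fixes x :: "'g::group_add \<Rightarrow> complex"
  assumes x: "l2 x" "lb x C" and C: "C \<ge> 0"
  shows "lb (adj x) C"
  unfolding lb_def
proof (intro allI impI)
  fix \<xi> :: "'g \<Rightarrow> complex" assume \<xi>: "l2 \<xi>"
  define v where "v = conv (adj x) \<xi>"
  have v_eq: "v g = (\<Sum>\<^sub>\<infinity>m. \<xi> m * cnj (x (m + -g)))" for g
    unfolding v_def conv_def adj_def
    by (rule infsum_reindex_bij_witness[where j="\<lambda>k. -k + g" and i="\<lambda>m. g + -m"])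
       (simp_all add: add.assoc minus_add)
  have xs: "l2 (\<lambda>m. cnj (x (m + -g)))" for g
    using x(1) l2_rshift[of x "-g"] l2_cnj[of "\<lambda>m. x (m + -g)"] by simp
  have "(\<Sum>g\<in>G. (norm (v g))\<^sup>2) \<le> (C * l2norm \<xi>) * sqrt (\<Sum>g\<in>G. (norm (v g))\<^sup>2)"
    if G: "finite G" for G
  proof -
    define \<eta> where "\<eta> = (\<lambda>g. if g \<in> G then v g else 0)"
    have l2\<eta>: "l2 \<eta>" by (rule l2_fin[OF G]) (simp add: \<eta>_def)
    have n\<eta>: "l2norm \<eta> = sqrt (\<Sum>g\<in>G. (norm (v g))\<^sup>2)"
      unfolding l2norm_nn by (subst nn_fin[OF G]) (auto simp: \<eta>_def)
    have "complex_of_real (\<Sum>g\<in>G. (norm (v g))\<^sup>2) = (\<Sum>g\<in>G. v g * cnj (\<eta> g))"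
      unfolding of_real_sum by (rule sum.cong[OF refl]) (simp add: \<eta>_def complex_norm_square del: of_real_power)
    also have "\<dots> = (\<Sum>g\<in>G. \<Sum>\<^sub>\<infinity>m. \<xi> m * cnj (x (m + -g)) * cnj (\<eta> g))"
      by (rule sum.cong[OF refl], unfold v_eq, rule infsum_cmult_left[symmetric], rule cs_bound(1)[OF \<xi> xs])
    also have "\<dots> = (\<Sum>\<^sub>\<infinity>m. \<Sum>g\<in>G. \<xi> m * cnj (x (m + -g)) * cnj (\<eta> g))"
      by (rule infsum_sum_swap[OF G, THEN conjunct2, symmetric])
         (intro summable_on_cmult_left cs_bound(1)[OF \<xi> xs])
    also have "\<dots> = (\<Sum>\<^sub>\<infinity>m. \<xi> m * cnj (conv x \<eta> m))"
    proof (rule infsum_cong)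
      fix m
      have "conv x \<eta> m = (\<Sum>g\<in>G. x (m + -g) * \<eta> g)"
        by (rule conv_fin2[OF G]) (simp add: \<eta>_def)
      thus "(\<Sum>g\<in>G. \<xi> m * cnj (x (m + -g)) * cnj (\<eta> g)) = \<xi> m * cnj (conv x \<eta> m)"
        by (simp add: sum_distrib_left mult.assoc)
    qed
    finally have eq: "complex_of_real (\<Sum>g\<in>G. (norm (v g))\<^sup>2) = (\<Sum>\<^sub>\<infinity>m. \<xi> m * cnj (conv x \<eta> m))" .
    have lc: "l2 (conv x \<eta>)" "l2norm (conv x \<eta>) \<le> C * l2norm \<eta>"
      using x(2) l2\<eta> unfolding lb_def by auto
    have "(\<Sum>g\<in>G. (norm (v g))\<^sup>2) = norm (complex_of_real (\<Sum>g\<in>G. (norm (v g))\<^sup>2))"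
      by (subst norm_of_real) (simp add: sum_nonneg)
    also have "\<dots> \<le> l2norm \<xi> * l2norm (\<lambda>m. cnj (conv x \<eta> m))"
      unfolding eq by (rule cs_bound(2)[OF \<xi>]) (simp add: l2_cnj lc)
    also have "\<dots> \<le> l2norm \<xi> * (C * l2norm \<eta>)"
    proof -
      have "l2norm (\<lambda>m. cnj (conv x \<eta> m)) = l2norm (conv x \<eta>)"
        unfolding l2norm_nn nn_cnj ..
      thus ?thesis using lc(2) by (simp add: mult_left_mono l2norm_nonneg)
    qed
    finally show ?thesis using n\<eta> by (simp add: mult_ac)
  qed
  hence "l2 v \<and> l2norm v \<le> C * l2norm \<xi>"
    by (intro dual_bound) (auto simp: C l2norm_nonneg)
  thus "l2 (conv (adj x) \<xi>) \<and> l2norm (conv (adj x) \<xi>) \<le> C * l2norm \<xi>"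
    unfolding v_def .
qed

lemma l2_negf: fixes h :: "'g::group_add \<Rightarrow> complex"
  shows "l2 (\<lambda>k. cnj (h (-k))) \<longleftrightarrow> l2 h" and "l2norm (\<lambda>k. cnj (h (-k))) = l2norm h"
proof -
  show "l2 (\<lambda>k. cnj (h (-k))) \<longleftrightarrow> l2 h"
    using l2_bij(1)[OF bij_neg, of h] l2_cnj[of "\<lambda>k. h (-k)"] by simp
  show "l2norm (\<lambda>k. cnj (h (-k))) = l2norm h"
    using l2_bij(2)[OF bij_neg, of h] nn_cnj[of "\<lambda>k. h (-k)"] by (simp add: l2norm_nn)
qed

lemma flip_rb:
  fixes r :: "'g::group_add \<Rightarrow> complex"
  assumes "lb (adj r) C"
  shows "rb r C"
  unfolding rb_def
proof (intro allI impI)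
  fix \<xi> :: "'g \<Rightarrow> complex" assume \<xi>: "l2 \<xi>"
  define \<zeta> where "\<zeta> = (\<lambda>m. cnj (\<xi> (-m)))"
  have l\<zeta>: "l2 \<zeta>" "l2norm \<zeta> = l2norm \<xi>" unfolding \<zeta>_def using l2_negf[of \<xi>] \<xi> by auto
  define w where "w = conv (adj r) \<zeta>"
  have lw: "l2 w" "l2norm w \<le> C * l2norm \<zeta>" using assms l\<zeta> unfolding lb_def w_def by auto
  have eq: "conv \<xi> r = (\<lambda>k. cnj (w (-k)))"
  proof
    fix k
    have "conv \<xi> r k = (\<Sum>\<^sub>\<infinity>m. r (-m) * \<xi> (k + m))"
      unfolding conv_def
      by (rule infsum_reindex_bij_witness[where j="\<lambda>j. -k + j" and i="\<lambda>m. k + m"])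
         (simp_all add: add.assoc[symmetric] minus_add mult.commute)
    also have "\<dots> = cnj (w (-k))"
      unfolding w_def conv_def adj_def \<zeta>_def infsum_cnj[symmetric]
      by (simp add: minus_add)
    finally show "conv \<xi> r k = cnj (w (-k))" .
  qed
  show "l2 (conv \<xi> r) \<and> l2norm (conv \<xi> r) \<le> C * l2norm \<xi>"
    unfolding eq using l2_negf[of w] lw l\<zeta> by simp
qed

lemma adj_adj: "adj (adj x) = x"
  by (simp add: adj_def)

lemma l2_adj: fixes x :: "'g::group_add \<Rightarrow> complex" shows "l2 (adj x) \<longleftrightarrow> l2 x"
  unfolding adj_def by (rule l2_negf(1))

lemma LG_props:
  fixes x :: "'g::group_add \<Rightarrow> complex"
  assumes "x \<in> LG"
  shows "\<exists>C\<ge>0. l2 x \<and> l2 (adj x) \<and> lb x C \<and> lb (adj x) C \<and> rb x C \<and> rb (adj x) C"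
proof -
  obtain C0 where l: "l2 x" "lb x C0" using assms unfolding LG_lb by auto
  define C where "C = max C0 0"
  have lC: "lb x C" unfolding lb_def
  proof (intro allI impI)
    fix \<xi> :: "'g \<Rightarrow> complex" assume "l2 \<xi>"
    hence "l2 (conv x \<xi>)" "l2norm (conv x \<xi>) \<le> C0 * l2norm \<xi>" using l(2) unfolding lb_def by auto
    moreover have "C0 * l2norm \<xi> \<le> C * l2norm \<xi>" unfolding C_def
      by (intro mult_right_mono) (auto simp: l2norm_nonneg)
    ultimately show "l2 (conv x \<xi>) \<and> l2norm (conv x \<xi>) \<le> C * l2norm \<xi>" by auto
  qed
  have C0: "C \<ge> 0" unfolding C_def by simp
  have la: "lb (adj x) C" by (rule adj_lb[OF l(1) lC C0])
  have r1: "rb x C" by (rule flip_rb[OF la])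
  have r2: "rb (adj x) C" by (rule flip_rb) (simp add: adj_adj lC)
  show ?thesis using C0 l(1) l2_adj[of x] lC la r1 r2 by blast
qed

lemma grp1: "-h + (-(k + -h) + g) = -k + (g::'g::group_add)"
  by (simp only: minus_add minus_minus add.assoc[symmetric] left_minus add_0_left)

lemma assoc_fin:
  fixes a b0 c :: "'g::group_add \<Rightarrow> complex"
  assumes a: "l2 a" and c: "l2 c" and F: "finite F" and b0: "\<And>k. k \<notin> F \<Longrightarrow> b0 k = 0"
  shows "conv (conv a b0) c g = conv a (conv b0 c) g"
proof -
  have la: "l2 (\<lambda>k. a (k + -h))" for h using a l2_rshift by blast
  have lc: "l2 (\<lambda>k. c (-k + g))" using c l2_shift(1) by blast
  have lc2: "l2 (\<lambda>j. c (-h + (-j + g)))" for h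
  proof -
    have "(\<lambda>j. c (-h + (-j + g))) = (\<lambda>j. (\<lambda>k. c (-k + g)) (j + h))"
      by (simp only: minus_add add.assoc)
    thus ?thesis using lc l2_rshift[of "\<lambda>k. c (-k + g)" h] by simp
  qed
  have e1: "conv a b0 = (\<lambda>k. \<Sum>h\<in>F. a (k + -h) * b0 h)"
    by (rule ext, rule conv_fin2[OF F b0])
  have e2: "conv b0 c = (\<lambda>m. \<Sum>h\<in>F. b0 h * c (-h + m))"
    by (rule ext, rule conv_fin1[OF F b0])
  have r: "(\<Sum>\<^sub>\<infinity>k. a (k + -h) * c (-k + g)) = (\<Sum>\<^sub>\<infinity>j. a j * c (-h + (-j + g)))" for h
    by (rule infsum_reindex_bij_witness[where j="\<lambda>k. k + -h" and i="\<lambda>j. j + h"])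
       (simp_all only: grp1 add.assoc left_minus right_minus add_0_right UNIV_I)
  have "conv (conv a b0) c g = (\<Sum>\<^sub>\<infinity>k. \<Sum>h\<in>F. b0 h * (a (k + -h) * c (-k + g)))"
    by (subst e1) (simp add: conv_def sum_distrib_right sum_distrib_left mult_ac)
  also have "\<dots> = (\<Sum>h\<in>F. \<Sum>\<^sub>\<infinity>k. b0 h * (a (k + -h) * c (-k + g)))"
    by (rule infsum_sum_swap[OF F, THEN conjunct2])
       (intro summable_on_cmult_right cs_bound(1)[OF la lc])
  also have "\<dots> = (\<Sum>h\<in>F. b0 h * (\<Sum>\<^sub>\<infinity>j. a j * c (-h + (-j + g))))"
    by (rule sum.cong[OF refl], subst r[symmetric], rule infsum_cmult_right, rule cs_bound(1)[OF la lc])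
  also have "\<dots> = (\<Sum>h\<in>F. \<Sum>\<^sub>\<infinity>j. b0 h * (a j * c (-h + (-j + g))))"
    by (rule sum.cong[OF refl], rule infsum_cmult_right[symmetric], rule cs_bound(1)[OF a lc2])
  also have "\<dots> = (\<Sum>\<^sub>\<infinity>j. \<Sum>h\<in>F. b0 h * (a j * c (-h + (-j + g))))"
    by (rule infsum_sum_swap[OF F, THEN conjunct2, symmetric])
       (intro summable_on_cmult_right cs_bound(1)[OF a lc2])
  also have "\<dots> = conv a (conv b0 c) g"
    by (subst e2) (simp add: conv_def sum_distrib_right sum_distrib_left mult_ac)
  finally show ?thesis .
qed

lemma lbD: "lb a A \<Longrightarrow> l2 \<xi> \<Longrightarrow> l2 (conv a \<xi>)" "lb a A \<Longrightarrow> l2 \<xi> \<Longrightarrow> l2norm (conv a \<xi>) \<le> A * l2norm \<xi>"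
  by (auto simp: lb_def)

lemma rbD: "rb c C \<Longrightarrow> l2 \<xi> \<Longrightarrow> l2 (conv \<xi> c)" "rb c C \<Longrightarrow> l2 \<xi> \<Longrightarrow> l2norm (conv \<xi> c) \<le> C * l2norm \<xi>"
  by (auto simp: rb_def)

lemma assoc:
  fixes a b c :: "'g::group_add \<Rightarrow> complex"
  assumes a: "l2 a" and b: "l2 b" and c: "l2 c" and A: "lb a A" and C: "rb c C"
  shows "conv (conv a b) c = conv a (conv b c)"
proof
  fix g
  define P where "P b' = conv (conv a b') c g - conv a (conv b' c) g" for b'
  have Pb: "norm (P b') \<le> (A * l2norm c + l2norm a * C) * l2norm b'" if b': "l2 b'" for b'
  proof -
    have "norm (conv (conv a b') c g) \<le> l2norm (conv a b') * l2norm c"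
      by (rule conv_bound[OF lbD(1)[OF A b'] c])
    also have "\<dots> \<le> (A * l2norm b') * l2norm c"
      by (rule mult_right_mono[OF lbD(2)[OF A b'] l2norm_nonneg])
    finally have 1: "norm (conv (conv a b') c g) \<le> (A * l2norm b') * l2norm c" .
    have "norm (conv a (conv b' c) g) \<le> l2norm a * l2norm (conv b' c)"
      by (rule conv_bound[OF a rbD(1)[OF C b']])
    also have "\<dots> \<le> l2norm a * (C * l2norm b')"
      by (rule mult_left_mono[OF rbD(2)[OF C b'] l2norm_nonneg])
    finally have 2: "norm (conv a (conv b' c) g) \<le> l2norm a * (C * l2norm b')" .
    have "norm (P b') \<le> norm (conv (conv a b') c g) + norm (conv a (conv b' c) g)"
      unfolding P_def by (rule norm_triangle_ineq4)
    also have "\<dots> \<le> (A * l2norm b') * l2norm c + l2norm a * (C * l2norm b')"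
      using 1 2 by linarith
    finally show ?thesis by (simp add: algebra_simps)
  qed
  define K where "K = abs (A * l2norm c + l2norm a * C) + 1"
  have K: "K > 0" unfolding K_def by simp
  have small: "norm (P b) < e" if e: "e > 0" for e
  proof -
    obtain F where F: "finite F" and t: "l2norm (\<lambda>k. if k \<in> F then 0 else b k) < e / K"
      using l2_tail[OF b, of "e / K"] e K by auto
    define b0 where "b0 = (\<lambda>k. if k \<in> F then b k else 0)"
    define b1 where "b1 = (\<lambda>k. if k \<in> F then 0 else b k)"
    have l0: "l2 b0" and l1: "l2 b1" unfolding b0_def b1_def using l2_restr[OF b] by auto
    have bsplit: "b = (\<lambda>k. b0 k + b1 k)" unfolding b0_def b1_def by auto
    have P0: "P b0 = 0" unfolding P_def
      using assoc_fin[OF a c F, of b0 g] by (simp add: b0_def)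
    have ab: "conv a b = (\<lambda>k. conv a b0 k + conv a b1 k)"
      by (rule ext, subst bsplit, rule conv_add2[OF a l0 l1])
    have bc: "conv b c = (\<lambda>k. conv b0 c k + conv b1 c k)"
      by (rule ext, subst bsplit, rule conv_add1[OF l0 l1 c])
    have "P b = P b0 + P b1"
      unfolding P_def ab bc
      using conv_add1[OF lbD(1)[OF A l0] lbD(1)[OF A l1] c, of g]
        conv_add2[OF a rbD(1)[OF C l0] rbD(1)[OF C l1], of g]
      by simp
    hence "norm (P b) = norm (P b1)" using P0 by simp
    also have "\<dots> \<le> (A * l2norm c + l2norm a * C) * l2norm b1" by (rule Pb[OF l1])
    also have "\<dots> \<le> K * l2norm b1" unfolding K_def
      by (intro mult_right_mono) (auto simp: l2norm_nonneg)
    also have "\<dots> < K * (e / K)" using t K unfolding b1_def by (intro mult_strict_left_mono) auto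
    also have "\<dots> = e" using K by simp
    finally show ?thesis .
  qed
  have "P b = 0"
  proof (rule ccontr)
    assume "P b \<noteq> 0"
    hence "norm (P b) > 0" by simp
    from small[OF this] show False by simp
  qed
  thus "conv (conv a b) c g = conv a (conv b c) g" unfolding P_def by simp
qed

lemma pointwise_est:
  fixes x t y :: "'g::group_add \<Rightarrow> complex"
  assumes x: "l2 x" "lb x Cx" and t: "l2 t" "l2norm t \<le> B" and y: "l2 y"
    and F1: "finite F1" and F2: "finite F2" and B: "B \<ge> 0" and c: "c \<ge> 0"
    and tc: "\<And>a b. a \<in> F1 \<Longrightarrow> b \<in> F2 \<Longrightarrow> norm (t (-a + (g + -b))) \<le> c"
  shows "norm (conv (conv x t) y g) \<le>
     l2norm (conv x t) * l2norm (\<lambda>k. if k \<in> F2 then 0 else y k)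
     + (l2norm (\<lambda>k. if k \<in> F1 then 0 else x k) * B + (\<Sum>a\<in>F1. norm (x a)) * c) * (\<Sum>b\<in>F2. norm (y b))"
proof -
  define w where "w = conv x t"
  define y0 where "y0 = (\<lambda>k. if k \<in> F2 then y k else 0)"
  define y1 where "y1 = (\<lambda>k. if k \<in> F2 then 0 else y k)"
  define x0 where "x0 = (\<lambda>k. if k \<in> F1 then x k else 0)"
  define x1 where "x1 = (\<lambda>k. if k \<in> F1 then 0 else x k)"
  define X where "X = (\<Sum>a\<in>F1. norm (x a))"
  have lw: "l2 w" unfolding w_def by (rule lbD(1)[OF x(2) t(1)])
  have ly0: "l2 y0" and ly1: "l2 y1" unfolding y0_def y1_def using l2_restr[OF y] by auto
  have lx0: "l2 x0" and lx1: "l2 x1" unfolding x0_def x1_def using l2_restr[OF x(1)] by auto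
  have "conv w y g = conv w (\<lambda>k. y0 k + y1 k) g"
    by (rule arg_cong[where f="\<lambda>z. conv w z g"]) (auto simp: y0_def y1_def)
  also have "\<dots> = conv w y0 g + conv w y1 g" by (rule conv_add2[OF lw ly0 ly1])
  finally have e1: "conv w y g = conv w y0 g + conv w y1 g" .
  have n1: "norm (conv w y1 g) \<le> l2norm w * l2norm y1" by (rule conv_bound[OF lw ly1])
  have e2: "conv w y0 g = (\<Sum>b\<in>F2. w (g + -b) * y b)"
    by (subst conv_fin2[OF F2]) (auto simp: y0_def)
  have wb: "norm (w h) \<le> l2norm x1 * B + X * c" if h: "\<And>a. a \<in> F1 \<Longrightarrow> norm (t (-a + h)) \<le> c" for h
  proof -
    have "w h = conv (\<lambda>k. x0 k + x1 k) t h"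
      unfolding w_def by (rule arg_cong[where f="\<lambda>z. conv z t h"]) (auto simp: x0_def x1_def)
    also have "\<dots> = conv x0 t h + conv x1 t h" by (rule conv_add1[OF lx0 lx1 t(1)])
    finally have "w h = conv x0 t h + conv x1 t h" .
    hence "norm (w h) \<le> norm (conv x0 t h) + norm (conv x1 t h)" by (simp add: norm_triangle_ineq)
    moreover have "norm (conv x0 t h) \<le> X * c"
    proof -
      have "conv x0 t h = (\<Sum>a\<in>F1. x a * t (-a + h))"
        by (subst conv_fin1[OF F1]) (auto simp: x0_def)
      have "norm (\<Sum>a\<in>F1. x a * t (-a + h)) \<le> (\<Sum>a\<in>F1. norm (x a) * norm (t (-a + h)))"
        by (rule order_trans[OF norm_sum]) (simp add: norm_mult)
      also have "\<dots> \<le> (\<Sum>a\<in>F1. norm (x a) * c)"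
        by (rule sum_mono) (intro mult_left_mono h, auto)
      finally show ?thesis using \<open>conv x0 t h = _\<close> by (simp add: X_def sum_distrib_right)
    qed
    moreover have "norm (conv x1 t h) \<le> l2norm x1 * B"
      by (rule order_trans[OF conv_bound[OF lx1 t(1)]]) (intro mult_left_mono t(2) l2norm_nonneg)
    ultimately show ?thesis by linarith
  qed
  have "norm (conv w y0 g) \<le> (\<Sum>b\<in>F2. norm (w (g + -b)) * norm (y b))"
    unfolding e2 by (rule order_trans[OF norm_sum]) (simp add: norm_mult)
  also have "\<dots> \<le> (\<Sum>b\<in>F2. (l2norm x1 * B + X * c) * norm (y b))"
    by (rule sum_mono, rule mult_right_mono, rule wb, erule tc, assumption, simp)
  also have "\<dots> = (l2norm x1 * B + X * c) * (\<Sum>b\<in>F2. norm (y b))"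
    by (simp add: sum_distrib_left)
  finally have n0: "norm (conv w y0 g) \<le> (l2norm x1 * B + X * c) * (\<Sum>b\<in>F2. norm (y b))" .
  have "norm (conv w y g) \<le> norm (conv w y0 g) + norm (conv w y1 g)"
    unfolding e1 by (rule norm_triangle_ineq)
  thus ?thesis using n0 n1
    unfolding w_def y1_def x1_def X_def by linarith
qed

lemma arith1:
  fixes L y1 K \<delta> :: real
  assumes "0 \<le> L" "L \<le> K" "y1 < \<delta> / (4 * K)" "K > 0" "\<delta> > 0" "0 \<le> y1"
  shows "L * y1 \<le> \<delta> / 4"
proof -
  have "L * y1 \<le> K * y1" using assms by (intro mult_right_mono) auto
  also have "\<dots> \<le> K * (\<delta> / (4 * K))" using assms by (intro mult_left_mono) auto
  also have "\<dots> = \<delta> / 4" using assms by simp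
  finally show ?thesis .
qed

lemma arith2:
  fixes x1 B Y \<delta> :: real
  assumes "0 \<le> x1" "x1 < \<delta> / (4 * (B + 1) * (Y + 1))" "B \<ge> 0" "Y \<ge> 0" "\<delta> > 0"
  shows "x1 * B * Y \<le> \<delta> / 4"
proof -
  have "x1 * B * Y \<le> (\<delta> / (4 * (B + 1) * (Y + 1))) * B * Y"
    using assms by (intro mult_right_mono) auto
  also have "\<dots> = (\<delta> / 4) * (B / (B + 1)) * (Y / (Y + 1))"
    using assms by (simp add: field_simps)
  also have "\<dots> \<le> (\<delta> / 4) * 1 * 1"
    using assms by (intro mult_mono) auto
  finally show ?thesis by simp
qed

lemma arith3:
  fixes X Y \<delta> :: real
  assumes "X \<ge> 0" "Y \<ge> 0" "\<delta> > 0"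
  shows "X * (\<delta> / (4 * (X * Y + 1))) * Y \<le> \<delta> / 4"
proof -
  have XY: "X * Y + 1 > 0" using mult_nonneg_nonneg[of X Y] assms by linarith
  have "X * (\<delta> / (4 * (X * Y + 1))) * Y = (\<delta> / 4) * ((X * Y) / (X * Y + 1))"
    using XY by (simp add: field_simps)
  also have "\<dots> \<le> (\<delta> / 4) * 1"
    using assms XY by (intro mult_left_mono) (auto simp: divide_le_eq_1)
  finally show ?thesis by simp
qed

lemma main_G:
  fixes x y :: "'g::group_add \<Rightarrow> complex" and S' :: "('g \<Rightarrow> complex) set" and \<Sigma> :: "'g set"
  assumes x: "x \<in> LG" and y: "l2 y" and S': "\<And>t. t \<in> S' \<Longrightarrow> l2 t \<and> l2norm t \<le> B"
    and pos: "height_set \<Sigma> (sandwich x S' y) > 0"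
  shows "\<exists>F. finite F \<and> height_set (FSF F \<Sigma>) S' > 0"
proof -
  obtain Cx where Cx: "Cx \<ge> 0" "l2 x" "lb x Cx" using LG_props[OF x] by blast
  define B' where "B' = max B 0"
  have B': "B' \<ge> 0" unfolding B'_def by simp
  have tB: "l2 t \<and> l2norm t \<le> B'" if "t \<in> S'" for t
    using S'[OF that] unfolding B'_def by auto
  obtain e where e: "0 < e" "e < height_set \<Sigma> (sandwich x S' y)" using dense[OF pos] by blast
  have etop: "e < top" using e(2) top_greatest order.strict_trans2 by blast
  define \<delta> where "\<delta> = enn2real e"
  have \<delta>: "\<delta> > 0" unfolding \<delta>_def using e(1) etop by (simp add: enn2real_positive_iff)
  have e\<delta>: "ennreal \<delta> = e" unfolding \<delta>_def using etop by simp
  have big: "\<exists>\<gamma>\<in>\<Sigma>. \<delta> < norm (conv (conv x t) y (-\<gamma>))" if t: "t \<in> S'" for t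
  proof -
    have "conv (conv x t) y \<in> sandwich x S' y" unfolding sandwich_def using t by auto
    hence "e < height \<Sigma> (conv (conv x t) y)"
      using e(2) unfolding height_set_def by (simp add: less_INF_D)
    then obtain \<gamma> where \<gamma>: "\<gamma> \<in> \<Sigma>" "e < ennreal (cmod (tau (conv (conv (conv x t) y) (cu \<gamma>))))"
      unfolding height_def less_SUP_iff by blast
    have "\<delta> < norm (conv (conv x t) y (-\<gamma>))"
      using \<gamma>(2) unfolding tau_conv_cu e\<delta>[symmetric] using \<delta> by (simp add: ennreal_less_iff)
    thus ?thesis using \<gamma>(1) by blast
  qed
  define K where "K = Cx * B' + 1"
  have K: "K > 0" unfolding K_def using mult_nonneg_nonneg[OF Cx(1) B'] by linarith
  obtain F2 where F2: "finite F2" and y1: "l2norm (\<lambda>k. if k \<in> F2 then 0 else y k) < \<delta> / (4 * K)"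
    using l2_tail[OF y, of "\<delta> / (4 * K)"] \<delta> K by auto
  define Y where "Y = (\<Sum>b\<in>F2. norm (y b))"
  have Y: "Y \<ge> 0" unfolding Y_def by (simp add: sum_nonneg)
  obtain F1 where F1: "finite F1" and x1: "l2norm (\<lambda>k. if k \<in> F1 then 0 else x k) < \<delta> / (4 * (B' + 1) * (Y + 1))"
    using l2_tail[OF Cx(2), of "\<delta> / (4 * (B' + 1) * (Y + 1))"] \<delta> B' Y by auto
  define X where "X = (\<Sum>a\<in>F1. norm (x a))"
  have X: "X \<ge> 0" unfolding X_def by (simp add: sum_nonneg)
  define c where "c = \<delta> / (4 * (X * Y + 1))"
  have c: "c > 0" unfolding c_def using \<delta> mult_nonneg_nonneg[OF X Y] by (intro divide_pos_pos) auto
  define F where "F = F1 \<union> F2"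
  have hb: "ennreal c \<le> height (FSF F \<Sigma>) t" if t: "t \<in> S'" for t
  proof -
    obtain \<gamma> where \<gamma>: "\<gamma> \<in> \<Sigma>" "\<delta> < norm (conv (conv x t) y (-\<gamma>))" using big[OF t] by blast
    have "\<exists>a\<in>F1. \<exists>b\<in>F2. c \<le> norm (t (-a + (-\<gamma> + -b)))"
    proof (rule ccontr)
      assume "\<not> ?thesis"
      hence tc: "\<And>a b. a \<in> F1 \<Longrightarrow> b \<in> F2 \<Longrightarrow> norm (t (-a + (-\<gamma> + -b))) \<le> c" by force
      have est: "norm (conv (conv x t) y (-\<gamma>)) \<le>
         l2norm (conv x t) * l2norm (\<lambda>k. if k \<in> F2 then 0 else y k)
         + (l2norm (\<lambda>k. if k \<in> F1 then 0 else x k) * B' + X * c) * Y"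
        unfolding X_def Y_def
        by (rule pointwise_est[OF Cx(2,3) tB[OF t, THEN conjunct1] tB[OF t, THEN conjunct2] y F1 F2 B'])
           (use c tc in auto)
      have Lx: "l2norm (conv x t) \<le> K"
      proof -
        have "l2norm (conv x t) \<le> Cx * l2norm t" by (rule lbD(2)[OF Cx(3) tB[OF t, THEN conjunct1]])
        also have "\<dots> \<le> Cx * B'" using tB[OF t] Cx(1) by (intro mult_left_mono) auto
        finally show ?thesis unfolding K_def by simp
      qed
      have a1: "l2norm (conv x t) * l2norm (\<lambda>k. if k \<in> F2 then 0 else y k) \<le> \<delta> / 4"
        by (rule arith1[OF l2norm_nonneg Lx y1 K \<delta> l2norm_nonneg])
      have a2: "l2norm (\<lambda>k. if k \<in> F1 then 0 else x k) * B' * Y \<le> \<delta> / 4"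
        by (rule arith2[OF l2norm_nonneg x1 B' Y \<delta>])
      have a3: "X * c * Y \<le> \<delta> / 4" unfolding c_def by (rule arith3[OF X Y \<delta>])
      have "(l2norm (\<lambda>k. if k \<in> F1 then 0 else x k) * B' + X * c) * Y
            = l2norm (\<lambda>k. if k \<in> F1 then 0 else x k) * B' * Y + X * c * Y"
        by (simp add: algebra_simps)
      thus False using est a1 a2 a3 \<gamma>(2) \<delta> by linarith
    qed
    then obtain a b where ab: "a \<in> F1" "b \<in> F2" "c \<le> norm (t (-a + (-\<gamma> + -b)))" by blast
    have mem: "b + \<gamma> + a \<in> FSF F \<Sigma>" unfolding FSF_def F_def using ab \<gamma>(1) by blast
    have eqg: "-(b + \<gamma> + a) = -a + (-\<gamma> + -b)" by (simp only: minus_add add.assoc)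
    have "ennreal c \<le> ennreal (cmod (tau (conv t (cu (b + \<gamma> + a)))))"
      unfolding tau_conv_cu eqg using ab(3) by (simp add: ennreal_leI)
    also have "\<dots> \<le> height (FSF F \<Sigma>) t"
      unfolding height_def by (rule SUP_upper[OF mem])
    finally show ?thesis .
  qed
  have "ennreal c \<le> height_set (FSF F \<Sigma>) S'"
    unfolding height_set_def by (rule INF_greatest) (rule hb)
  moreover have "ennreal c > 0" using c by simp
  ultimately have "height_set (FSF F \<Sigma>) S' > 0" by (rule order.strict_trans2[rotated])
  thus ?thesis using F1 F2 unfolding F_def by blast
qed

lemma height_mono: "T \<subseteq> U \<Longrightarrow> height T z \<le> height U z"
  unfolding height_def by (rule SUP_subset_mono) auto

lemma height_set_mono: "T \<subseteq> U \<Longrightarrow> height_set T S \<le> height_set U S"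
  unfolding height_set_def by (rule INF_mono) (use height_mono in blast)

lemma ball_props:
  fixes t :: "'g::group_add \<Rightarrow> complex"
  assumes "t \<in> LG_ball"
  shows "t \<in> LG" "l2 t" "l2norm t \<le> 1"
proof -
  show "t \<in> LG" using assms unfolding LG_ball_def by auto
  thus "l2 t" unfolding LG_def by auto
  have "l2norm (conv t (cu 0)) \<le> l2norm (cu 0 :: 'g \<Rightarrow> complex)"
    using assms l2_cu unfolding LG_ball_def by blast
  thus "l2norm t \<le> 1" by (simp add: conv_cu0_right l2norm_cu0)
qed

lemma lemma2p4_aux:
  fixes \<Sigma> :: "'g::group_add set"
    and S :: "('g \<Rightarrow> complex) set"
  assumes S: "S \<subseteq> LG_ball"
  shows "((\<exists>x\<in>LG. \<exists>y\<in>LG. height_set \<Sigma> (sandwich x S y) > 0)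
            \<longrightarrow> (\<exists>F. finite F \<and> height_set (FSF F \<Sigma>) S > 0))
       \<and> (\<forall>u. unitary_LG u \<longrightarrow>
            (height_set UNIV S > 0 \<longleftrightarrow> height_set UNIV (sandwich u S (adj u)) > 0))"
proof (intro conjI impI allI)
  have Sp: "\<And>t. t \<in> S \<Longrightarrow> l2 t \<and> l2norm t \<le> 1" using S ball_props by blast
  assume "\<exists>x\<in>LG. \<exists>y\<in>LG. height_set \<Sigma> (sandwich x S y) > 0"
  then obtain x y where x: "x \<in> LG" and y: "y \<in> LG" and h: "height_set \<Sigma> (sandwich x S y) > 0" by blast
  have "l2 y" using y unfolding LG_def by auto
  show "\<exists>F. finite F \<and> height_set (FSF F \<Sigma>) S > 0"
    by (rule main_G[OF x \<open>l2 y\<close> Sp h])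
next
  fix u :: "'g \<Rightarrow> complex"
  assume u: "unitary_LG u"
  have uLG: "u \<in> LG" and u1: "conv (adj u) u = cu 0" and u2: "conv u (adj u) = cu 0"
    using u unfolding unitary_LG_def by auto
  obtain C where C: "C \<ge> 0" "l2 u" "l2 (adj u)" "lb u C" "lb (adj u) C" "rb u C" "rb (adj u) C"
    using LG_props[OF uLG] by blast
  have aLG: "adj u \<in> LG" unfolding LG_lb using C by blast
  have Sp: "\<And>t. t \<in> S \<Longrightarrow> l2 t \<and> l2norm t \<le> 1" using S ball_props by blast
  show "height_set UNIV S > 0 \<longleftrightarrow> height_set UNIV (sandwich u S (adj u)) > 0"
  proof
    assume h: "height_set UNIV (sandwich u S (adj u)) > 0"
    obtain F where "finite F" "height_set (FSF F UNIV) S > 0"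
      using main_G[OF uLG C(3) Sp h] by blast
    thus "height_set UNIV S > 0"
      using height_set_mono[of "FSF F UNIV" UNIV S] by (meson order.strict_trans2 subset_UNIV)
  next
    assume h: "height_set UNIV S > 0"
    define S' where "S' = sandwich u S (adj u)"
    have S'p: "l2 t \<and> l2norm t \<le> C * C" if tS: "t \<in> S'" for t
    proof -
      obtain s where s: "s \<in> S" "t = conv (conv u s) (adj u)" using tS unfolding S'_def sandwich_def by auto
      have ls: "l2 s" "l2norm s \<le> 1" using Sp[OF s(1)] by auto
      have l1: "l2 (conv u s)" "l2norm (conv u s) \<le> C * l2norm s" using lbD[OF C(4) ls(1)] by auto
      have "l2 t" "l2norm t \<le> C * l2norm (conv u s)" unfolding s(2) using rbD[OF C(7) l1(1)] by auto
      moreover have "C * l2norm (conv u s) \<le> C * (C * 1)"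
        using l1(2) ls(2) C(1) by (meson mult_left_mono order_trans)
      ultimately show ?thesis by simp
    qed
    have bk: "conv (conv (adj u) (conv (conv u s) (adj u))) u = s" if s: "s \<in> S" for s
    proof -
      have sLG: "s \<in> LG" using S s ball_props by blast
      obtain D where D: "D \<ge> 0" "l2 s" "l2 (adj s)" "lb s D" "lb (adj s) D" "rb s D" "rb (adj s) D"
        using LG_props[OF sLG] by blast
      have lus: "l2 (conv u s)" by (rule lbD(1)[OF C(4) D(2)])
      have "conv (adj u) (conv (conv u s) (adj u)) = conv (conv (adj u) (conv u s)) (adj u)"
        by (rule assoc[OF C(3) lus C(3) C(5) C(7), symmetric])
      also have "conv (adj u) (conv u s) = conv (conv (adj u) u) s"
        by (rule assoc[OF C(3) C(2) D(2) C(5) D(6), symmetric])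
      also have "\<dots> = s" by (simp add: u1 conv_cu0_left)
      finally have "conv (adj u) (conv (conv u s) (adj u)) = conv s (adj u)" .
      hence "conv (conv (adj u) (conv (conv u s) (adj u))) u = conv (conv s (adj u)) u" by simp
      also have "\<dots> = conv s (conv (adj u) u)"
        by (rule assoc[OF D(2) C(3) C(2) D(4) C(6)])
      also have "\<dots> = s" by (simp add: u1 conv_cu0_right)
      finally show ?thesis .
    qed
    have eqS: "sandwich (adj u) S' u = S"
      unfolding S'_def sandwich_def image_comp
      using bk by (simp add: comp_def)
    have h': "height_set UNIV (sandwich (adj u) S' u) > 0" using h eqS by simp
    obtain F where "finite F" "height_set (FSF F UNIV) S' > 0"
      using main_G[OF aLG C(2) S'p h'] by blast
    thus "height_set UNIV (sandwich u S (adj u)) > 0"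
      using height_set_mono[of "FSF F UNIV" UNIV S'] unfolding S'_def
      by (meson order.strict_trans2 subset_UNIV)
  qed
qed

theorem lemma2p4:
  fixes \<Sigma> :: "'g::{group_add, countable} set"
    and S :: "('g \<Rightarrow> complex) set"
  assumes "S \<subseteq> LG_ball"
  shows "((\<exists>x\<in>LG. \<exists>y\<in>LG. height_set \<Sigma> (sandwich x S y) > 0)
            \<longrightarrow> (\<exists>F. finite F \<and> height_set (FSF F \<Sigma>) S > 0))
       \<and> (\<forall>u. unitary_LG u \<longrightarrow>
            (height_set UNIV S > 0 \<longleftrightarrow> height_set UNIV (sandwich u S (adj u)) > 0))"
  by (rule lemma2p4_aux[OF assms])

end
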